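(* Let $G=(V,E)$ be a connected graph, $s\in V$, $\mathcal{T}$ the layering tree of $G$ with respect to $s$, and $\ell\ge \ell(\mathcal{T})$ an integer. Suppose $u,v\in V$ belong to the same part $P$ of $\mathcal{T}$ at layer $k$. Then there is a $u$-$v$ path in $G$ all of whose vertices lie in $L_{\ge k}\cap L_{\le k+\ell+1}$; i.e. $u$ and $v$ are connected in $G\setminus(L_{\le k-1}\cup L_{\ge k+\ell+2})$.
   Context: For a connected graph $G$ and root $s\in V(G)$, the BFS layers are $L_i=\{v: d_G(s,v)=i\}$ for $i\ge 0$, with $L_{\le k}=L_0\cup\dots\cup L_k$, $L_{\ge k}=\bigcup_{j\ge k}L_j$, $L_{-1}=\emptyset$. For each $i\ge 0$, let $S_i^1,\dots,S_i^{s_i}$ be the connected components of $G\setminus L_{\le i-1}$ (i.e. of $G[L_{\ge i}]$), and let $P_i^j=S_i^j\cap L_i$; the nonempty sets $P_i^j$ are the parts at layer (depth) $i$, and the set $\mathcal{P}$ of all parts over all layers partitions $V(G)$. The layering tree $\mathcal{T}=(\mathcal{P},\mathcal{E})$ has the parts as vertices, with $(P,P')\in\mathcal{E}$ iff some $u\in P$, $u'\in P'$ are adjacent in $G$. Its length is $\ell(\mathcal{T})=\max_{P\in\mathcal{P}}\max_{u,v\in P} d_G(u,v)$ (distances measured in $G$). *)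

theory Defs
  imports Main
begin

definition graph :: "'a set \<Rightarrow> ('a \<Rightarrow> 'a \<Rightarrow> bool) \<Rightarrow> bool" where
  "graph V E \<longleftrightarrow> finite V \<and> (\<forall>u v. E u v \<longrightarrow> u \<in> V \<and> v \<in> V)
     \<and> (\<forall>u v. E u v \<longrightarrow> E v u) \<and> (\<forall>u. \<not> E u u)"

definition walk_in :: "('a \<Rightarrow> 'a \<Rightarrow> bool) \<Rightarrow> 'a set \<Rightarrow> 'a list \<Rightarrow> 'a \<Rightarrow> 'a \<Rightarrow> bool" where
  "walk_in E S p u v \<longleftrightarrow> p \<noteq> [] \<and> hd p = u \<and> last p = v \<and> set p \<subseteq> S
     \<and> (\<forall>i. Suc i < length p \<longrightarrow> E (p ! i) (p ! Suc i))"

definition path_in :: "('a \<Rightarrow> 'a \<Rightarrow> bool) \<Rightarrow> 'a set \<Rightarrow> 'a list \<Rightarrow> 'a \<Rightarrow> 'a \<Rightarrow> bool" where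
  "path_in E S p u v \<longleftrightarrow> walk_in E S p u v \<and> distinct p"

definition connected_in :: "('a \<Rightarrow> 'a \<Rightarrow> bool) \<Rightarrow> 'a set \<Rightarrow> 'a \<Rightarrow> 'a \<Rightarrow> bool" where
  "connected_in E S u v \<longleftrightarrow> (\<exists>p. walk_in E S p u v)"

definition connected_graph :: "'a set \<Rightarrow> ('a \<Rightarrow> 'a \<Rightarrow> bool) \<Rightarrow> bool" where
  "connected_graph V E \<longleftrightarrow> graph V E \<and> V \<noteq> {} \<and> (\<forall>u\<in>V. \<forall>v\<in>V. connected_in E V u v)"

definition dist :: "'a set \<Rightarrow> ('a \<Rightarrow> 'a \<Rightarrow> bool) \<Rightarrow> 'a \<Rightarrow> 'a \<Rightarrow> nat" where
  "dist V E u v = (LEAST n. \<exists>p. walk_in E V p u v \<and> length p = Suc n)"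

definition layer :: "'a set \<Rightarrow> ('a \<Rightarrow> 'a \<Rightarrow> bool) \<Rightarrow> 'a \<Rightarrow> nat \<Rightarrow> 'a set" where
  "layer V E s i = {v \<in> V. dist V E s v = i}"

definition layers_le :: "'a set \<Rightarrow> ('a \<Rightarrow> 'a \<Rightarrow> bool) \<Rightarrow> 'a \<Rightarrow> int \<Rightarrow> 'a set" where
  "layers_le V E s k = {v \<in> V. int (dist V E s v) \<le> k}"

definition layers_ge :: "'a set \<Rightarrow> ('a \<Rightarrow> 'a \<Rightarrow> bool) \<Rightarrow> 'a \<Rightarrow> int \<Rightarrow> 'a set" where
  "layers_ge V E s k = {v \<in> V. int (dist V E s v) \<ge> k}"

definition components :: "('a \<Rightarrow> 'a \<Rightarrow> bool) \<Rightarrow> 'a set \<Rightarrow> 'a set set" where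
  "components E S = {{v \<in> S. connected_in E S u v} | u. u \<in> S}"

text \<open>Parts at layer i: nonempty intersections of a component of G \ L_{\<le> i-1}
  (= G[L_{\<ge> i}]) with L_i.\<close>
definition parts_at :: "'a set \<Rightarrow> ('a \<Rightarrow> 'a \<Rightarrow> bool) \<Rightarrow> 'a \<Rightarrow> nat \<Rightarrow> 'a set set" where
  "parts_at V E s i =
     {C \<inter> layer V E s i | C. C \<in> components E (V - layers_le V E s (int i - 1))
                            \<and> C \<inter> layer V E s i \<noteq> {}}"

definition parts :: "'a set \<Rightarrow> ('a \<Rightarrow> 'a \<Rightarrow> bool) \<Rightarrow> 'a \<Rightarrow> 'a set set" where
  "parts V E s = (\<Union>i. parts_at V E s i)"

definition layering_tree_length :: "'a set \<Rightarrow> ('a \<Rightarrow> 'a \<Rightarrow> bool) \<Rightarrow> 'a \<Rightarrow> nat" where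
  "layering_tree_length V E s =
     Max {dist V E u v | u v P. P \<in> parts V E s \<and> u \<in> P \<and> v \<in> P}"

end

theory Submission
  imports Defs
begin


lemma walk_single[simp]: "walk_in E S [x] a b \<longleftrightarrow> x = a \<and> x = b \<and> x \<in> S"
  unfolding walk_in_def by auto

lemma walk_cons2: "walk_in E S (x # y # p) a b \<longleftrightarrow> x = a \<and> x \<in> S \<and> E x y \<and> walk_in E S (y # p) y b"
proof
  assume h: "walk_in E S (x # y # p) a b"
  have e: "\<And>i. Suc i < length (x # y # p) \<Longrightarrow> E ((x # y # p) ! i) ((x # y # p) ! Suc i)"
    using h unfolding walk_in_def by blast
  have "E x y" using e[of 0] by simp
  moreover have "\<And>i. Suc i < length (y # p) \<Longrightarrow> E ((y # p) ! i) ((y # p) ! Suc i)"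
  proof -
    fix i assume "Suc i < length (y # p)"
    then have "Suc (Suc i) < length (x # y # p)" by simp
    from e[OF this] show "E ((y # p) ! i) ((y # p) ! Suc i)" by simp
  qed
  ultimately show "x = a \<and> x \<in> S \<and> E x y \<and> walk_in E S (y # p) y b"
    using h unfolding walk_in_def by auto
next
  assume h: "x = a \<and> x \<in> S \<and> E x y \<and> walk_in E S (y # p) y b"
  have e: "\<And>i. Suc i < length (y # p) \<Longrightarrow> E ((y # p) ! i) ((y # p) ! Suc i)"
    using h unfolding walk_in_def by blast
  have "E ((x # y # p) ! i) ((x # y # p) ! Suc i)" if "Suc i < length (x # y # p)" for i
  proof (cases i)
    case 0 then show ?thesis using h by auto
  next
    case (Suc j)
    then have "Suc j < length (y # p)" using that by simp
    from e[OF this] show ?thesis using Suc by simp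
  qed
  then show "walk_in E S (x # y # p) a b"
    using h unfolding walk_in_def by auto
qed

lemma walk_nil[simp]: "\<not> walk_in E S [] a b" unfolding walk_in_def by auto

lemma walk_app_edge: "walk_in E S p a y \<Longrightarrow> E y z \<Longrightarrow> walk_in E S q z b \<Longrightarrow> walk_in E S (p @ q) a b"
proof (induction p arbitrary: a)
  case Nil then show ?case by simp
next
  case (Cons x p)
  show ?case
  proof (cases p)
    case Nil
    then have "walk_in E S (x # q) a b"
      proof (cases q)
      case (Cons z' q')
      have "z' = z" using Cons.prems(3) \<open>q = z' # q'\<close> unfolding walk_in_def by simp
      have "x = a" "x = y" "x \<in> S" using Cons.prems(1) \<open>p = []\<close> by auto
      then show ?thesis unfolding \<open>q = z' # q'\<close> walk_cons2 \<open>z' = z\<close>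
        using Cons.prems(2,3) \<open>q = z' # q'\<close> \<open>z' = z\<close> by simp
    qed (use Cons.prems in auto)
    then show ?thesis using Nil by simp
  next
    case (Cons y' p')
    have w0: "walk_in E S (x # y' # p') a y" using Cons.prems(1) Cons by simp
    have h: "x = a" "x \<in> S" "E x y'" "walk_in E S (y' # p') y' y"
      using iffD1[OF walk_cons2 w0] by blast+
    have "walk_in E S ((y' # p') @ q) y' b" using Cons.IH[of y'] h(4) Cons.prems(2,3) Cons by blast
    then have "walk_in E S (y' # (p' @ q)) y' b" by simp
    then have "walk_in E S (x # y' # (p' @ q)) a b" using h walk_cons2[of E S x y' "p' @ q" a b] by blast
    then show ?thesis using Cons by simp
  qed
qed

lemma walk_hd: "walk_in E S (x # p) a b \<Longrightarrow> x = a \<and> x \<in> S"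
  unfolding walk_in_def by auto

lemma walk_split: "walk_in E S (p @ w # r) a b \<longleftrightarrow> walk_in E S (p @ [w]) a w \<and> walk_in E S (w # r) w b"
proof (induction p arbitrary: a)
  case Nil
  show ?case
  proof
    assume "walk_in E S ([] @ w # r) a b"
    then show "walk_in E S ([] @ [w]) a w \<and> walk_in E S (w # r) w b" using walk_hd[of E S w r a b] by auto
  next
    assume "walk_in E S ([] @ [w]) a w \<and> walk_in E S (w # r) w b"
    then show "walk_in E S ([] @ w # r) a b" by auto
  qed
next
  case (Cons x p)
  show ?case
  proof (cases p)
    case Nil
    have "walk_in E S [w] w w" if "walk_in E S (w # r) w b" using walk_hd[OF that] by simp
    then show ?thesis using Nil by (simp only: append.simps walk_cons2) blast
  next
    case (Cons y p')
    show ?thesis using Cons.IH[of y] Cons by (simp only: append.simps walk_cons2) blast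
  qed
qed

lemma walk_join: "walk_in E S p a y \<Longrightarrow> walk_in E S (y # q) y b \<Longrightarrow> walk_in E S (p @ q) a b"
proof -
  assume h: "walk_in E S p a y" "walk_in E S (y # q) y b"
  have "p \<noteq> []" using h by auto
  then obtain p' where p: "p = p' @ [y]" using h unfolding walk_in_def
    by (metis append_butlast_last_id)
  then show ?thesis using h walk_split[of E S p' y q a b] by simp
qed

lemma walk_rev: "(\<forall>x y. E x y \<longrightarrow> E y x) \<Longrightarrow> walk_in E S p a b \<Longrightarrow> walk_in E S (rev p) b a"
proof (induction p arbitrary: a)
  case Nil then show ?case by simp
next
  case (Cons x p)
  show ?case
  proof (cases p)
    case Nil then show ?thesis using Cons.prems by auto
  next
    case (Cons y p')
    have w0: "walk_in E S (x # y # p') a b" using Cons.prems(2) Cons by simp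
    have h: "x = a" "x \<in> S" "E x y" "walk_in E S (y # p') y b"
      using iffD1[OF walk_cons2 w0] by blast+
    then have "x = a" "x \<in> S" "E x y" "walk_in E S p y b" using Cons by simp_all
    then have "walk_in E S (rev p) b y" using Cons.IH Cons.prems(1) by blast
    moreover have "E y x" using \<open>E x y\<close> Cons.prems(1) by blast
    ultimately show ?thesis using walk_app_edge[of E S "rev p" b y x "[x]" a] \<open>x = a\<close> \<open>x \<in> S\<close> by simp
  qed
qed

lemma walk_mono: "walk_in E S p a b \<Longrightarrow> set p \<subseteq> S' \<Longrightarrow> walk_in E S' p a b"
  unfolding walk_in_def by auto

lemma walk_take: "walk_in E S p a b \<Longrightarrow> i < length p \<Longrightarrow> walk_in E S (take (Suc i) p) a (p ! i)"
proof -
  assume h: "walk_in E S p a b" "i < length p"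
  have e: "p = take i p @ p ! i # drop (Suc i) p" using h(2) by (rule id_take_nth_drop)
  have "walk_in E S (take i p @ [p ! i]) a (p ! i)"
    using h(1) walk_split[of E S "take i p" "p ! i" "drop (Suc i) p" a b] e by metis
  then show ?thesis using h(2) by (simp add: take_Suc_conv_app_nth)
qed

lemma walk_drop: "walk_in E S p a b \<Longrightarrow> i < length p \<Longrightarrow> walk_in E S (drop i p) (p ! i) b"
proof -
  assume h: "walk_in E S p a b" "i < length p"
  have e: "p = take i p @ p ! i # drop (Suc i) p" using h(2) by (rule id_take_nth_drop)
  have "walk_in E S (p ! i # drop (Suc i) p) (p ! i) b"
    using h(1) walk_split[of E S "take i p" "p ! i" "drop (Suc i) p" a b] e by metis
  then show ?thesis using h(2) by (simp add: Cons_nth_drop_Suc)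
qed

lemma walk_to_path: "walk_in E S p a b \<Longrightarrow> \<exists>q. path_in E S q a b"
proof (induction "length p" arbitrary: p rule: less_induct)
  case less
  show ?case
  proof (cases "distinct p")
    case True then show ?thesis using less.prems unfolding path_in_def by blast
  next
    case False
    then obtain xs w ys zs where p: "p = xs @ [w] @ ys @ [w] @ zs" using not_distinct_decomp by blast
    then have p: "p = xs @ w # ys @ w # zs" by simp
    have "walk_in E S (xs @ [w]) a w" "walk_in E S (w # ys @ w # zs) w b"
      using less.prems walk_split[of E S xs w "ys @ w # zs" a b] p by auto
    moreover have "walk_in E S (w # zs) w b"
      using calculation(2) walk_split[of E S "w # ys" w zs w b] by simp
    ultimately have "walk_in E S (xs @ w # zs) a b" using walk_split[of E S xs w zs a b] by simp
    moreover have "length (xs @ w # zs) < length p" using p by simp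
    ultimately show ?thesis using less.hyps by blast
  qed
qed

lemma conn_refl: "x \<in> S \<Longrightarrow> connected_in E S x x"
  unfolding connected_in_def by (rule exI[of _ "[x]"]) simp

lemma conn_edge: "connected_in E S x y \<Longrightarrow> E y z \<Longrightarrow> connected_in E S z w \<Longrightarrow> connected_in E S x w"
  unfolding connected_in_def by (metis walk_app_edge)

lemma conn_trans: "connected_in E S x y \<Longrightarrow> connected_in E S y z \<Longrightarrow> connected_in E S x z"
proof -
  assume "connected_in E S x y" "connected_in E S y z"
  then obtain p q where pq: "walk_in E S p x y" "walk_in E S q y z" unfolding connected_in_def by blast
  then obtain q' where "q = y # q'" unfolding walk_in_def by (cases q) auto
  then show ?thesis using pq walk_join unfolding connected_in_def by metis
qed

lemma conn_sym: "(\<forall>x y. E x y \<longrightarrow> E y x) \<Longrightarrow> connected_in E S x y \<Longrightarrow> connected_in E S y x"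
  unfolding connected_in_def by (metis walk_rev)



lemma graph_E: "graph V E \<Longrightarrow> E x y \<Longrightarrow> x \<in> V \<and> y \<in> V" unfolding graph_def by blast
lemma graph_sym: "graph V E \<Longrightarrow> \<forall>x y. E x y \<longrightarrow> E y x" unfolding graph_def by blast

lemma dist_ex:
  assumes "connected_graph V E" "x \<in> V" "y \<in> V"
  shows "\<exists>p. walk_in E V p x y \<and> length p = Suc (dist V E x y)"
proof -
  from assms obtain p where p: "walk_in E V p x y" unfolding connected_graph_def connected_in_def by blast
  then have "p \<noteq> []" unfolding walk_in_def by simp
  then have "length p = Suc (length p - 1)" by simp
  then have "\<exists>n p. walk_in E V p x y \<and> length p = Suc n" using p by blast
  then show ?thesis unfolding dist_def by (rule LeastI_ex)
qed

lemma dist_le: "walk_in E V p x y \<Longrightarrow> dist V E x y \<le> length p - 1"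
proof -
  assume p: "walk_in E V p x y"
  then have "p \<noteq> []" unfolding walk_in_def by simp
  then have "length p = Suc (length p - 1)" by simp
  then have "\<exists>p'. walk_in E V p' x y \<and> length p' = Suc (length p - 1)" using p by blast
  then show ?thesis unfolding dist_def by (rule Least_le)
qed

lemma dist_sym1:
  assumes "connected_graph V E" "x \<in> V" "y \<in> V"
  shows "dist V E y x \<le> dist V E x y"
proof -
  obtain p where p: "walk_in E V p x y" "length p = Suc (dist V E x y)" using dist_ex[OF assms] by blast
  have "walk_in E V (rev p) y x" using walk_rev[OF _ p(1)] graph_sym assms(1) unfolding connected_graph_def by blast
  from dist_le[OF this] show ?thesis using p(2) by simp
qed

lemma dist_sym:
  assumes "connected_graph V E" "x \<in> V" "y \<in> V"
  shows "dist V E x y = dist V E y x"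
  using dist_sym1[OF assms] dist_sym1[OF assms(1,3,2)] by simp

lemma dist_tri:
  assumes "connected_graph V E" "x \<in> V" "y \<in> V" "z \<in> V"
  shows "dist V E x z \<le> dist V E x y + dist V E y z"
proof -
  obtain p where p: "walk_in E V p x y" "length p = Suc (dist V E x y)" using dist_ex[OF assms(1,2,3)] by blast
  obtain q where q: "walk_in E V q y z" "length q = Suc (dist V E y z)" using dist_ex[OF assms(1,3,4)] by blast
  obtain q' where q': "q = y # q'" using q(1) unfolding walk_in_def by (cases q) auto
  have "walk_in E V (p @ q') x z" using walk_join[of E V p x y q' z] p(1) q(1) q' by simp
  from dist_le[OF this] show ?thesis using p(2) q(2) q' by simp
qed

lemma dist_edge:
  assumes "connected_graph V E" "E x y"
  shows "dist V E x y \<le> 1"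
proof -
  have "x \<in> V \<and> y \<in> V" using assms unfolding connected_graph_def graph_def by blast
  then have "x \<in> V" "y \<in> V" by simp_all
  then have "walk_in E V [x, y] x y" using assms(2) walk_cons2[of E V x y "[]" x y] by simp
  from dist_le[OF this] show ?thesis by simp
qed

lemma parts_sub: "P \<in> parts V E s \<Longrightarrow> P \<subseteq> V"
  unfolding parts_def parts_at_def layer_def by auto

lemma diam:
  assumes cg: "connected_graph V E" and xy: "x \<in> V" "y \<in> V"
    "dist V E s x = j" "dist V E s y = j"
    and conn: "connected_in E {w\<in>V. j \<le> dist V E s w} x y"
  shows "dist V E x y \<le> layering_tree_length V E s"
proof -
  let ?S = "V - layers_le V E s (int j - 1)"
  have S: "?S = {w\<in>V. j \<le> dist V E s w}" unfolding layers_le_def by auto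
  let ?C = "{w \<in> ?S. connected_in E ?S x w}"
  have xS: "x \<in> ?S" "y \<in> ?S" using S xy by auto
  have C: "?C \<in> components E ?S" unfolding components_def using xS by blast
  have "x \<in> ?C" using xS conn_refl[of x ?S E] by blast
  moreover have "y \<in> ?C" using xS conn S by simp
  moreover have "x \<in> layer V E s j" "y \<in> layer V E s j" unfolding layer_def using xy by auto
  ultimately have "?C \<inter> layer V E s j \<in> parts_at V E s j" "x \<in> ?C \<inter> layer V E s j" "y \<in> ?C \<inter> layer V E s j"
    unfolding parts_at_def using C by blast+
  then have P: "?C \<inter> layer V E s j \<in> parts V E s" unfolding parts_def by blast
  have fin: "finite {dist V E u v | u v P. P \<in> parts V E s \<and> u \<in> P \<and> v \<in> P}"
  proof (rule finite_subset)
    show "{dist V E u v | u v P. P \<in> parts V E s \<and> u \<in> P \<and> v \<in> P} \<subseteq> (\<lambda>(u,v). dist V E u v) ` (V \<times> V)"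
      using parts_sub by fastforce
    show "finite ((\<lambda>(u,v). dist V E u v) ` (V \<times> V))"
      using cg unfolding connected_graph_def graph_def by simp
  qed
  have "dist V E x y \<in> {dist V E u v | u v P. P \<in> parts V E s \<and> u \<in> P \<and> v \<in> P}"
    using P \<open>x \<in> ?C \<inter> layer V E s j\<close> \<open>y \<in> ?C \<inter> layer V E s j\<close> by blast
  then show ?thesis unfolding layering_tree_length_def using fin by (rule Max_ge[rotated])
qed

lemma bridge:
  assumes cg: "connected_graph V E" and sV: "s \<in> V"
    and lL: "layering_tree_length V E s \<le> l"
    and xy: "x \<in> V" "y \<in> V" "dist V E s x = j" "dist V E s y = j"
    and conn: "connected_in E {w\<in>V. j \<le> dist V E s w} x y"
    and jdef: "j = k + (l + 1) div 2"
  shows "connected_in E {w\<in>V. k \<le> dist V E s w \<and> dist V E s w \<le> k + l + 1} x y"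
proof -
  have dxy: "dist V E x y \<le> l" using diam[OF cg xy conn] lL by simp
  obtain p where p: "walk_in E V p x y" "length p = Suc (dist V E x y)" using dist_ex[OF cg xy(1,2)] by blast
  have "set p \<subseteq> {w\<in>V. k \<le> dist V E s w \<and> dist V E s w \<le> k + l + 1}"
  proof
    fix w assume "w \<in> set p"
    then obtain i where i: "i < length p" "p ! i = w" by (auto simp: in_set_conv_nth)
    have wV: "w \<in> V" using p(1) \<open>w \<in> set p\<close> unfolding walk_in_def by blast
    have a1: "dist V E x w \<le> i" using dist_le[OF walk_take[OF p(1) i(1)]] i by simp
    have a2: "dist V E w y \<le> length p - 1 - i" using dist_le[OF walk_drop[OF p(1) i(1)]] i by simp
    have t1: "dist V E s w \<le> dist V E s x + dist V E x w" using dist_tri[OF cg sV xy(1) wV] .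
    have t2: "dist V E s w \<le> dist V E s y + dist V E y w" using dist_tri[OF cg sV xy(2) wV] .
    have t3: "dist V E s x \<le> dist V E s w + dist V E w x" using dist_tri[OF cg sV wV xy(1)] .
    have t4: "dist V E s y \<le> dist V E s w + dist V E w y" using dist_tri[OF cg sV wV xy(2)] .
    have s1: "dist V E y w = dist V E w y" using dist_sym[OF cg xy(2) wV] .
    have s2: "dist V E w x = dist V E x w" using dist_sym[OF cg wV xy(1)] .
    have sum: "dist V E x w + dist V E w y \<le> l" using a1 a2 i(1) p(2) dxy by linarith
    have h1: "l \<le> 2 * ((l + 1) div 2)" "2 * ((l + 1) div 2) \<le> l + 1" by presburger+
    show "w \<in> {w\<in>V. k \<le> dist V E s w \<and> dist V E s w \<le> k + l + 1}"
      using wV t1 t2 t3 t4 s1 s2 sum h1 xy(3,4) jdef by simp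
  qed
  then have "walk_in E {w\<in>V. k \<le> dist V E s w \<and> dist V E s w \<le> k + l + 1} p x y" by (rule walk_mono[OF p(1)])
  then show ?thesis unfolding connected_in_def by blast
qed



lemma claim:
  assumes cg: "connected_graph V E" and sV: "s \<in> V"
    and H: "\<And>x y. x \<in> V \<Longrightarrow> y \<in> V \<Longrightarrow> dist V E s x = j \<Longrightarrow> dist V E s y = j
               \<Longrightarrow> connected_in E {w\<in>V. j \<le> dist V E s w} x y \<Longrightarrow> connected_in E T x y"
    and lowT: "\<And>w. w \<in> V \<Longrightarrow> k \<le> dist V E s w \<Longrightarrow> dist V E s w < j \<Longrightarrow> w \<in> T"
  shows "walk_in E {w\<in>V. k \<le> dist V E s w} q a b \<Longrightarrow> dist V E s a < j \<Longrightarrow> dist V E s b < j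
     \<Longrightarrow> connected_in E T a b"
proof (induction "length q" arbitrary: q a rule: less_induct)
  case less
  let ?L = "{w\<in>V. k \<le> dist V E s w}"
  have sym: "\<forall>x y. E x y \<longrightarrow> E y x" using cg graph_sym unfolding connected_graph_def by blast
  obtain a' q' where q: "q = a' # q'" using less.prems(1) by (cases q) auto
  have "a' = a" "a \<in> ?L" using walk_hd[of E ?L a' q' a b] less.prems(1) q by auto
  then have aT: "a \<in> T" using lowT less.prems(2) by blast
  show ?case
  proof (cases q')
    case Nil
    then have "a = b" using less.prems(1) q by auto
    then show ?thesis using conn_refl[OF aT] by simp
  next
    case (Cons c r)
    have w0: "walk_in E ?L (a' # c # r) a b" using less.prems(1) q Cons by simp
    have h: "E a c" "walk_in E ?L (c # r) c b" using iffD1[OF walk_cons2 w0] \<open>a' = a\<close> by blast+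
    have aV: "a \<in> V" using \<open>a \<in> ?L\<close> by blast
    have cV: "c \<in> V" using walk_hd[OF h(2)] by blast
    show ?thesis
    proof (cases "dist V E s c < j")
      case True
      have "connected_in E T c b" using less.hyps[of "c # r" c] h(2) True less.prems(3) q Cons by simp
      then show ?thesis using conn_edge[of E T a a c, OF conn_refl[OF aT] h(1)] by blast
    next
      case False
      define qq where "qq = c # r"
      have wq: "walk_in E ?L qq c b" using h(2) qq_def by simp
      have lastb: "qq ! (length qq - 1) = b" using wq unfolding walk_in_def by (metis last_conv_nth)
      have ex: "\<exists>i. i < length qq \<and> dist V E s (qq ! i) < j"
        using lastb less.prems(3) by (intro exI[of _ "length qq - 1"]) (simp add: qq_def)
      define i0 where "i0 = (LEAST i. i < length qq \<and> dist V E s (qq ! i) < j)"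
      have i0: "i0 < length qq" "dist V E s (qq ! i0) < j" using LeastI_ex[OF ex] unfolding i0_def by blast+
      have below: "\<And>m. m < i0 \<Longrightarrow> j \<le> dist V E s (qq ! m)"
        using not_less_Least i0(1) unfolding i0_def by fastforce
      have "i0 \<noteq> 0" using False i0(2) qq_def by (cases i0) auto
      then obtain i1 where i1: "i0 = Suc i1" by (cases i0) auto
      define y where "y = qq ! i1"
      define z where "z = qq ! i0"
      have qV: "set qq \<subseteq> V" using wq unfolding walk_in_def by blast
      have yV: "y \<in> V" using qV i0(1) i1 unfolding y_def by auto
      have zV: "z \<in> V" using qV i0(1) unfolding z_def by auto
      have Eyz: "E y z" using wq i0(1) i1 unfolding walk_in_def y_def z_def by auto
      have dc: "dist V E s c = j"
      proof -
        have "dist V E s c \<le> dist V E s a + dist V E a c" using dist_tri[OF cg sV aV cV] .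
        moreover have "dist V E a c \<le> 1" using dist_edge[OF cg h(1)] .
        ultimately show ?thesis using False less.prems(2) by linarith
      qed
      have dy: "dist V E s y = j"
      proof -
        have "dist V E s y \<le> dist V E s z + dist V E z y" using dist_tri[OF cg sV zV yV] .
        moreover have "dist V E z y \<le> 1" using dist_edge[of V E z y, OF cg] Eyz sym by blast
        moreover have "j \<le> dist V E s y" using below[of i1] i1 unfolding y_def by simp
        ultimately show ?thesis using i0(2) unfolding z_def by linarith
      qed
      have wt: "walk_in E ?L (take i0 qq) c y"
        using walk_take[OF wq, of i1] i0(1) i1 unfolding y_def by simp
      have "set (take i0 qq) \<subseteq> {w\<in>V. j \<le> dist V E s w}"
      proof
        fix w assume "w \<in> set (take i0 qq)"
        then obtain m where m: "m < length (take i0 qq)" "take i0 qq ! m = w" by (auto simp: in_set_conv_nth)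
        then have "m < i0" "qq ! m = w" by auto
        then show "w \<in> {w\<in>V. j \<le> dist V E s w}" using below[of m] qV i0(1) by auto
      qed
      then have "walk_in E {w\<in>V. j \<le> dist V E s w} (take i0 qq) c y" by (rule walk_mono[OF wt])
      then have "connected_in E {w\<in>V. j \<le> dist V E s w} c y" unfolding connected_in_def by blast
      then have cy: "connected_in E T c y" using H[OF cV yV dc dy] by blast
      have wd: "walk_in E ?L (drop i0 qq) z b" using walk_drop[OF wq i0(1)] unfolding z_def .
      have "length (drop i0 qq) < length q" using q Cons qq_def by simp
      then have zb: "connected_in E T z b"
        using less.hyps[OF _ wd] i0(2) less.prems(3) unfolding z_def by blast
      have "connected_in E T a y" using conn_edge[of E T a a c y, OF conn_refl[OF aT] h(1) cy] .
      then show ?thesis using conn_edge[of E T a y z b, OF _ Eyz zb] by blast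
    qed
  qed
qed

theorem mainTheorem3:
  fixes V :: "'a set" and E :: "'a \<Rightarrow> 'a \<Rightarrow> bool" and s u v :: 'a
    and l k :: nat and P :: "'a set"
  assumes "connected_graph V E"
    and "s \<in> V"
    and "l \<ge> layering_tree_length V E s"
    and "P \<in> parts_at V E s k"
    and "u \<in> P" and "v \<in> P"
  shows "\<exists>p. path_in E (layers_ge V E s (int k) \<inter> layers_le V E s (int k + int l + 1)) p u v"
proof -
  note cg = assms(1) and sV = assms(2)
  let ?T = "{w\<in>V. k \<le> dist V E s w \<and> dist V E s w \<le> k + l + 1}"
  have Teq: "layers_ge V E s (int k) \<inter> layers_le V E s (int k + int l + 1) = ?T"
    unfolding layers_ge_def layers_le_def by auto
  let ?S = "V - layers_le V E s (int k - 1)"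
  have S: "?S = {w\<in>V. k \<le> dist V E s w}" unfolding layers_le_def by auto
  obtain C where C: "P = C \<inter> layer V E s k" "C \<in> components E ?S"
    using assms(4) unfolding parts_at_def by blast
  obtain c where c: "c \<in> ?S" "C = {w \<in> ?S. connected_in E ?S c w}"
    using C(2) unfolding components_def by blast
  have sym: "\<forall>x y. E x y \<longrightarrow> E y x" using cg graph_sym unfolding connected_graph_def by blast
  have cu: "connected_in E ?S c u" "connected_in E ?S c v" using assms(5,6) C(1) c(2) by auto
  have uv: "connected_in E ?S u v" using conn_trans[OF conn_sym[OF sym cu(1)] cu(2)] .
  have du: "u \<in> V" "dist V E s u = k" "v \<in> V" "dist V E s v = k"
    using assms(5,6) C(1) unfolding layer_def by auto
  define j where "j = k + (l + 1) div 2"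
  have H: "\<And>x y. x \<in> V \<Longrightarrow> y \<in> V \<Longrightarrow> dist V E s x = j \<Longrightarrow> dist V E s y = j
               \<Longrightarrow> connected_in E {w\<in>V. j \<le> dist V E s w} x y \<Longrightarrow> connected_in E ?T x y"
    using bridge[OF cg sV assms(3) _ _ _ _ _ j_def] by blast
  have conT: "connected_in E ?T u v"
  proof (cases "l = 0")
    case True
    then have "j = k" unfolding j_def by simp
    then show ?thesis using H[OF du(1) du(3)] du uv S by simp
  next
    case False
    then have kj: "k < j" unfolding j_def by simp
    have lowT: "\<And>w. w \<in> V \<Longrightarrow> k \<le> dist V E s w \<Longrightarrow> dist V E s w < j \<Longrightarrow> w \<in> ?T"
      unfolding j_def by auto
    obtain q where q: "walk_in E {w\<in>V. k \<le> dist V E s w} q u v" using uv S unfolding connected_in_def by auto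
    show ?thesis using claim[OF cg sV H lowT q] du kj by simp
  qed
  then obtain p where "walk_in E ?T p u v" unfolding connected_in_def by blast
  then show ?thesis using walk_to_path Teq by metis
qed

end
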